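(* Let $N > n$ and let $A$ be an $N \times n$ random matrix whose entries are independent random variables with absolutely continuous distributions. Then almost surely the following holds: for every $x \in S^{n-1}$ at which $\|Ax\|_1$ attains its minimum over $S^{n-1}$, the vector $Ax$ has exactly $N - n + 1$ nonzero coordinates.
   Context: $\|y\|_1 = \sum_j |y_j|$; $S^{n-1}$ is the Euclidean unit sphere in $\mathbb{R}^n$. *)

theory Defs
  imports "HOL-Probability.Probability"
begin

definition l1norm :: "real ^ 'm \<Rightarrow> real" where
  "l1norm y = (\<Sum>i\<in>UNIV. \<bar>y $ i\<bar>)"

end

theory Submission
  imports Defs
begin


lemma det_row_expand:
  fixes C :: "real^'n^'n"
  shows "det (\<chi> r. if r = k then v else C $ r) = (\<Sum>j\<in>UNIV. v$j * det (\<chi> r. if r = k then axis j 1 else C $ r))"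
proof -
  have "(\<chi> r. if r = k then v else C $ r) = (\<chi> r. if r = k then (\<Sum>j\<in>UNIV. v$j *s axis j 1) else C $ r)"
    by (simp only: basis_expansion)
  also have "det \<dots> = (\<Sum>j\<in>UNIV. det (\<chi> r. if r = k then v$j *s axis j 1 else C $ r))"
    by (rule det_linear_row_sum[where a="\<lambda>i j. v$j *s axis j 1"]) simp
  also have "\<dots> = (\<Sum>j\<in>UNIV. v$j * det (\<chi> r. if r = k then axis j 1 else C $ r))"
    by (rule sum.cong[OF refl]) (rule det_row_mul)
  finally show ?thesis .
qed

lemma borel_measurable_det:
  fixes F :: "'b \<Rightarrow> real^'n^'n"
  assumes "\<And>i j. (\<lambda>y. F y $ i $ j) \<in> borel_measurable N"
  shows "(\<lambda>y. det (F y)) \<in> borel_measurable N"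
  unfolding det_def using assms by (intro borel_measurable_sum borel_measurable_prod borel_measurable_times borel_measurable_const) auto

lemma meas_comp_if:
  "(\<lambda>y. if q = p0 then (0::real) else y q) \<in> borel_measurable (PiM (UNIV - {p0}) (\<lambda>_. borel))"
  by (cases "q = p0") auto

lemma (in prob_space) key_null:
  fixes X :: "'a \<Rightarrow> 'b" and Y :: "'a \<Rightarrow> 'b" and f :: "'b \<Rightarrow> real"
  assumes ind: "indep_var N1 X N2 Y"
    and f: "f \<in> borel_measurable N1"
    and ac: "absolutely_continuous lborel (distr M lborel (\<lambda>\<omega>. f (X \<omega>)))"
    and h: "h \<in> borel_measurable N2" and g: "g \<in> borel_measurable N2"
  shows "AE \<omega> in M. \<not> (f (X \<omega>) * h (Y \<omega>) + g (Y \<omega>) = 0 \<and> h (Y \<omega>) \<noteq> 0)"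
proof -
  have rvX: "random_variable N1 X" and rvY: "random_variable N2 Y"
    using ind by (auto simp: indep_var_distribution_eq)
  have eq: "distr M N1 X \<Otimes>\<^sub>M distr M N2 Y = distr M (N1 \<Otimes>\<^sub>M N2) (\<lambda>x. (X x, Y x))"
    using ind by (simp add: indep_var_distribution_eq)
  define S where "S = {p \<in> space (N1 \<Otimes>\<^sub>M N2). f (fst p) * h (snd p) + g (snd p) = 0 \<and> h (snd p) \<noteq> 0}"
  have Sm: "S \<in> sets (N1 \<Otimes>\<^sub>M N2)"
    unfolding S_def using h g f by measurable
  interpret P1: prob_space "distr M N1 X" by (rule prob_space_distr[OF rvX])
  interpret P2: prob_space "distr M N2 Y" by (rule prob_space_distr[OF rvY])
  interpret PP: pair_sigma_finite "distr M N1 X" "distr M N2 Y" ..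
  have fX: "(\<lambda>\<omega>. f (X \<omega>)) \<in> measurable M lborel" using rvX f by simp
  have pt: "emeasure (distr M N1 X) {x \<in> space N1. f x = c} = 0" for c
  proof -
    have "{c} \<in> null_sets lborel" by (rule finite_imp_null_set_lborel) simp
    hence "{c} \<in> null_sets (distr M lborel (\<lambda>\<omega>. f (X \<omega>)))" using ac unfolding absolutely_continuous_def by blast
    hence 0: "emeasure M ((\<lambda>\<omega>. f (X \<omega>)) -` {c} \<inter> space M) = 0"
      using fX by (metis (no_types, lifting) emeasure_distr null_setsD1 sets.sets_into_space sets_distr sets_lborel space_borel space_lborel top_greatest subset_antisym finite_imp_null_set_lborel finite.emptyI finite_insert null_setsD2)
    have "emeasure (distr M N1 X) {x \<in> space N1. f x = c} = emeasure M (X -` {x \<in> space N1. f x = c} \<inter> space M)"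
      using rvX f by (subst emeasure_distr) auto
    also have "X -` {x \<in> space N1. f x = c} \<inter> space M = (\<lambda>\<omega>. f (X \<omega>)) -` {c} \<inter> space M"
      using measurable_space[OF rvX] by auto
    finally show ?thesis using 0 by simp
  qed
  have "emeasure (distr M N1 X \<Otimes>\<^sub>M distr M N2 Y) S = 0"
  proof -
    have "emeasure (distr M N1 X \<Otimes>\<^sub>M distr M N2 Y) S
        = (\<integral>\<^sup>+y. emeasure (distr M N1 X) ((\<lambda>x. (x, y)) -` S) \<partial>distr M N2 Y)"
      by (rule PP.emeasure_pair_measure_alt2) (simp add: Sm)
    also have "\<dots> = (\<integral>\<^sup>+y. 0 \<partial>distr M N2 Y)"
    proof (rule nn_integral_cong)
      fix y assume "y \<in> space (distr M N2 Y)"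
      have "(\<lambda>x. (x, y)) -` S \<subseteq> {x \<in> space N1. f x = - g y / h y}"
        by (auto simp: S_def field_simps space_pair_measure)
      hence "emeasure (distr M N1 X) ((\<lambda>x. (x, y)) -` S) \<le> emeasure (distr M N1 X) {x \<in> space N1. f x = - g y / h y}"
        using f by (intro emeasure_mono) auto
      thus "emeasure (distr M N1 X) ((\<lambda>x. (x, y)) -` S) = 0" using pt by simp
    qed
    finally show ?thesis by simp
  qed
  hence "emeasure M ((\<lambda>x. (X x, Y x)) -` S \<inter> space M) = 0"
    using rvX rvY Sm by (simp add: eq emeasure_distr)
  moreover have "(\<lambda>x. (X x, Y x)) -` S \<inter> space M \<in> sets M"
    using rvX rvY Sm by measurable
  ultimately show ?thesis
    by (intro AE_I'[where N="(\<lambda>x. (X x, Y x)) -` S \<inter> space M"])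
       (auto simp: S_def space_pair_measure intro: measurable_space[OF rvY] measurable_space[OF rvX])
qed

lemma (in prob_space) det_sub_AE:
  fixes A :: "'a \<Rightarrow> real^'n^'N" and \<sigma> :: "'n \<Rightarrow> 'N" and D :: "real^'n^'n"
  assumes ind: "indep_vars (\<lambda>_. borel) (\<lambda>(i, j) \<omega>. A \<omega> $ i $ j) UNIV"
    and ac: "\<And>i j. absolutely_continuous lborel (distr M lborel (\<lambda>\<omega>. A \<omega> $ i $ j))"
    and \<sigma>: "inj \<sigma>" and D: "det D \<noteq> 0"
  shows "AE \<omega> in M. det (\<chi> r. if r \<in> R then A \<omega> $ \<sigma> r else D $ r) \<noteq> 0"
proof -
  have "finite R" by simp
  thus ?thesis
  proof (induction R rule: finite_induct)
    case empty
    then show ?case using D by simp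
  next
    case (insert k R')
    define B' where "B' \<omega> = (\<chi> r. if r \<in> R' then A \<omega> $ \<sigma> r else D $ r)" for \<omega>
    define c where "c j \<omega> = det (\<chi> r. if r = k then axis j 1 else B' \<omega> $ r)" for j \<omega>
    have e1: "det (\<chi> r. if r \<in> insert k R' then A \<omega> $ \<sigma> r else D $ r) = (\<Sum>j\<in>UNIV. A \<omega> $ \<sigma> k $ j * c j \<omega>)" for \<omega>
    proof -
      have "det (\<chi> r. if r \<in> insert k R' then A \<omega> $ \<sigma> r else D $ r) = det (\<chi> r. if r = k then A \<omega> $ \<sigma> k else B' \<omega> $ r)"
        by (rule arg_cong[where f=det], rule arg_cong[where f=vec_lambda], rule ext) (simp add: B'_def)
      also have "\<dots> = (\<Sum>j\<in>UNIV. A \<omega> $ \<sigma> k $ j * c j \<omega>)"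
        unfolding c_def by (rule det_row_expand)
      finally show ?thesis .
    qed
    have e2: "det (B' \<omega>) = (\<Sum>j\<in>UNIV. D $ k $ j * c j \<omega>)" for \<omega>
    proof -
      have "det (B' \<omega>) = det (\<chi> r. if r = k then D $ k else B' \<omega> $ r)"
        unfolding B'_def by (rule arg_cong[where f=det], rule arg_cong[where f=vec_lambda], rule ext) (use insert.hyps(2) in simp)
      also have "\<dots> = (\<Sum>j\<in>UNIV. D $ k $ j * c j \<omega>)"
        unfolding c_def by (rule det_row_expand)
      finally show ?thesis .
    qed
    have AE1: "AE \<omega> in M. \<exists>j. c j \<omega> \<noteq> 0"
      using insert.IH
    proof eventually_elim
      case (elim \<omega>)
      then have "det (B' \<omega>) \<noteq> 0" by (simp add: B'_def)
      show "\<exists>j. c j \<omega> \<noteq> 0"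
      proof (rule ccontr)
        assume "\<not> (\<exists>j. c j \<omega> \<noteq> 0)"
        hence "det (B' \<omega>) = 0" by (simp add: e2)
        with \<open>det (B' \<omega>) \<noteq> 0\<close> show False by simp
      qed
    qed
    have AE2: "AE \<omega> in M. \<forall>j\<in>UNIV. \<not> (A \<omega> $ \<sigma> k $ j * c j \<omega> + (\<Sum>j'\<in>UNIV-{j}. A \<omega> $ \<sigma> k $ j' * c j' \<omega>) = 0 \<and> c j \<omega> \<noteq> 0)"
    proof (rule AE_finite_allI, simp)
      fix j :: 'n
      define p0 where "p0 = (\<sigma> k, j)"
      define Xf where "Xf = (\<lambda>(i, j) \<omega>. A \<omega> $ i $ j)"
      define Mat where "Mat y = ((\<chi> i l. if (i, l) = p0 then 0 else y (i, l)) :: real^'n^'N)" for y :: "'N \<times> 'n \<Rightarrow> real"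
      define H where "H j' y = det (\<chi> r. if r = k then axis j' 1 else if r \<in> R' then Mat y $ \<sigma> r else D $ r)" for j' y
      define G where "G y = (\<Sum>j'\<in>UNIV-{j}. Mat y $ \<sigma> k $ j' * H j' y)" for y
      define Y where "Y \<omega> = restrict (\<lambda>p. Xf p \<omega>) (UNIV - {p0})" for \<omega>
      define X1 where "X1 \<omega> = restrict (\<lambda>p. Xf p \<omega>) {p0}" for \<omega>
      have indv: "indep_var (PiM {p0} (\<lambda>_. borel)) X1 (PiM (UNIV - {p0}) (\<lambda>_. borel)) Y"
        unfolding X1_def Y_def by (rule indep_var_restrict[OF ind[folded Xf_def]]) auto
      have fm: "(\<lambda>x. x p0) \<in> borel_measurable (PiM {p0} (\<lambda>_. borel))"
        by (rule measurable_component_singleton) simp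
      have matY: "Mat (Y \<omega>) $ i $ l = (if (i,l) = p0 then 0 else A \<omega> $ i $ l)" for \<omega> i l
        by (simp add: Mat_def Y_def Xf_def)
      have hY: "H j' (Y \<omega>) = c j' \<omega>" for j' \<omega>
        unfolding H_def c_def B'_def
        apply (rule arg_cong[where f=det])
        using \<sigma> insert.hyps(2) by (auto simp: vec_eq_iff matY p0_def inj_eq)
      have gY: "G (Y \<omega>) = (\<Sum>j'\<in>UNIV-{j}. A \<omega> $ \<sigma> k $ j' * c j' \<omega>)" for \<omega>
        unfolding G_def by (intro sum.cong) (auto simp: matY hY p0_def)
      have Hm: "H j' \<in> borel_measurable (PiM (UNIV - {p0}) (\<lambda>_. borel))" for j'
        unfolding H_def
      proof (rule borel_measurable_det)
        fix a b
        show "(\<lambda>y. (\<chi> r. if r = k then axis j' 1 else if r \<in> R' then Mat y $ \<sigma> r else D $ r) $ a $ b)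
          \<in> borel_measurable (PiM (UNIV - {p0}) (\<lambda>_. borel))"
          by (cases "a = k"; cases "a \<in> R'") (simp_all add: Mat_def meas_comp_if)
      qed
      have Gm: "G \<in> borel_measurable (PiM (UNIV - {p0}) (\<lambda>_. borel))"
        unfolding G_def
        by (intro borel_measurable_sum borel_measurable_times Hm) (simp add: Mat_def meas_comp_if)
      have "AE \<omega> in M. \<not> ((\<lambda>x. x p0) (X1 \<omega>) * H j (Y \<omega>) + G (Y \<omega>) = 0 \<and> H j (Y \<omega>) \<noteq> 0)"
        by (rule key_null[OF indv fm _ Hm Gm]) (use ac[of "\<sigma> k" j] in \<open>simp add: X1_def Xf_def p0_def\<close>)
      then show "AE \<omega> in M. \<not> (A \<omega> $ \<sigma> k $ j * c j \<omega> + (\<Sum>j'\<in>UNIV-{j}. A \<omega> $ \<sigma> k $ j' * c j' \<omega>) = 0 \<and> c j \<omega> \<noteq> 0)"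
        by (simp add: hY gY X1_def Xf_def p0_def)
    qed
    show ?case using AE1 AE2
    proof eventually_elim
      case (elim \<omega>)
      then obtain j where j: "c j \<omega> \<noteq> 0" by auto
      with elim(2) have "A \<omega> $ \<sigma> k $ j * c j \<omega> + (\<Sum>j'\<in>UNIV-{j}. A \<omega> $ \<sigma> k $ j' * c j' \<omega>) \<noteq> 0" by auto
      then show ?case unfolding e1 using sum.remove[of UNIV j "\<lambda>j'. A \<omega> $ \<sigma> k $ j' * c j' \<omega>"] by simp
    qed
  qed
qed


lemma mv_inner: "((A::real^'n^'N) *v x) $ i = A $ i \<bullet> x"
  by (simp add: matrix_vector_mult_def inner_vec_def)

lemma l1norm_scale: "l1norm (c *\<^sub>R y) = \<bar>c\<bar> * l1norm y"
  by (simp add: l1norm_def sum_distrib_left abs_mult)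

lemma minimizer_card:
  fixes A :: "real^'n^'N" and x :: "real^'n"
  assumes gen: "\<And>\<sigma>::'n\<Rightarrow>'N. inj \<sigma> \<Longrightarrow> det (\<chi> r. A $ \<sigma> r) \<noteq> 0"
    and NN: "CARD('N) > CARD('n)"
    and x: "norm x = 1"
    and min: "\<forall>y. norm y = 1 \<longrightarrow> l1norm (A *v x) \<le> l1norm (A *v y)"
  shows "card {i. (A *v x) $ i \<noteq> 0} = CARD('N) - CARD('n) + 1"
proof -
  define a where "a = A *v x"
  define Z where "Z = {i. a $ i = 0}"
  have x0: "x \<noteq> 0" using x by auto
  have le: "card Z \<le> CARD('n) - 1"
  proof (rule ccontr)
    assume "\<not> card Z \<le> CARD('n) - 1"
    hence "CARD('n) \<le> card Z" by simp
    then obtain S where S: "S \<subseteq> Z" "card S = CARD('n)" "finite S"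
      by (rule obtain_subset_with_card_n)
    obtain \<sigma> where bij: "bij_betw \<sigma> (UNIV::'n set) S"
      using finite_same_card_bij[of "UNIV::'n set" S] S by auto
    have inj: "inj \<sigma>" using bij by (simp add: bij_betw_def)
    define B where "B = (\<chi> r. A $ \<sigma> r)"
    have "det B \<noteq> 0" unfolding B_def by (rule gen[OF inj])
    hence "invertible B" by (simp add: invertible_det_nz)
    then obtain B' where "B' ** B = mat 1" unfolding invertible_def by blast
    hence ker: "\<forall>y. B *v y = 0 \<longrightarrow> y = 0" using matrix_left_invertible_ker by blast
    have "B *v x = 0"
    proof -
      have "(B *v x) $ r = 0" for r
      proof -
        have "\<sigma> r \<in> Z" using bij S(1) by (auto simp: bij_betw_def)
        thus ?thesis by (simp add: mv_inner B_def Z_def a_def)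
      qed
      thus ?thesis by (simp add: vec_eq_iff)
    qed
    with ker x0 show False by blast
  qed
  have ge: "CARD('n) - 1 \<le> card Z"
  proof (rule ccontr)
    assume "\<not> CARD('n) - 1 \<le> card Z"
    hence cZ: "card Z + 1 < CARD('n)" by simp
    define S where "S = insert x ((\<lambda>i. A $ i) ` Z)"
    have "card S \<le> card Z + 1"
    proof -
      have "card ((\<lambda>i. A $ i) ` Z) \<le> card Z" by (rule card_image_le) simp
      then show ?thesis unfolding S_def by (simp add: card_insert_if)
    qed
    moreover have "dim S \<le> card S" by (rule dim_le_card) (auto simp: S_def intro: span_base)
    ultimately have dimS: "dim S < DIM(real^'n)" using cZ by simp
    obtain d where d0: "d \<noteq> 0" and dorth: "\<And>y. y \<in> span S \<Longrightarrow> orthogonal d y"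
      using orthogonal_to_subspace_exists[OF dimS] by blast
    have dx: "orthogonal d x" by (rule dorth) (simp add: S_def span_base)
    have dZ: "(A *v d) $ i = 0" if "i \<in> Z" for i
    proof -
      have "orthogonal d (A $ i)" by (rule dorth) (use that in \<open>simp add: S_def span_base\<close>)
      thus ?thesis by (simp add: mv_inner orthogonal_def inner_commute)
    qed
    obtain e where e0: "e \<noteq> 0" and ex: "orthogonal x e" and eZ: "\<And>i. i \<in> Z \<Longrightarrow> (A *v e) $ i = 0"
      and eL: "(\<Sum>i\<in>UNIV. sgn (a $ i) * (A *v e) $ i) \<le> 0"
    proof (cases "(\<Sum>i\<in>UNIV. sgn (a $ i) * (A *v d) $ i) \<le> 0")
      case True
      then show ?thesis using that[of d] d0 dx dZ by (simp add: orthogonal_commute)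
    next
      case False
      have "(\<Sum>i\<in>UNIV. sgn (a $ i) * (A *v (- d)) $ i) = - (\<Sum>i\<in>UNIV. sgn (a $ i) * (A *v d) $ i)"
        by (simp add: vec.neg sum_negf)
      moreover have "x \<bullet> d = 0" using dx by (simp add: orthogonal_def inner_commute)
      ultimately show ?thesis using that[of "- d"] d0 dZ False by (simp add: vec.neg orthogonal_def)
    qed
    define b where "b = A *v e"
    have nZ: "- Z \<noteq> {}"
    proof
      assume "- Z = {}"
      hence "Z = UNIV" by auto
      hence "card Z = CARD('N)" by simp
      with cZ NN show False by simp
    qed
    define m where "m = Min ((\<lambda>i. \<bar>a $ i\<bar>) ` (- Z))"
    have mpos: "m > 0" unfolding m_def using nZ by (auto simp: Z_def)
    have mle: "m \<le> \<bar>a $ i\<bar>" if "i \<notin> Z" for i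
      unfolding m_def using that by (intro Min_le) auto
    define K where "K = (\<Sum>i\<in>UNIV. \<bar>b $ i\<bar>) + 1"
    have bK: "\<bar>b $ i\<bar> < K" for i
    proof -
      have "\<bar>b $ i\<bar> \<le> (\<Sum>i\<in>UNIV. \<bar>b $ i\<bar>)" by (rule member_le_sum) auto
      thus ?thesis by (simp add: K_def)
    qed
    have Kpos: "K > 0" using bK[of undefined] by linarith
    define t where "t = m / K"
    have tpos: "t > 0" using mpos Kpos by (simp add: t_def)
    have small: "t * \<bar>b $ i\<bar> < \<bar>a $ i\<bar>" if "i \<notin> Z" for i
    proof -
      have "t * \<bar>b $ i\<bar> < t * K" using tpos bK[of i] by simp
      also have "t * K = m" using Kpos by (simp add: t_def)
      finally show ?thesis using mle[OF that] by simp
    qed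
    define v where "v = x + t *\<^sub>R e"
    have Av: "A *v v = a + t *\<^sub>R b"
      by (simp add: v_def a_def b_def matrix_vector_right_distrib matrix_vector_mult_scaleR)
    have pw: "\<bar>a $ i + t * b $ i\<bar> = \<bar>a $ i\<bar> + t * (sgn (a $ i) * b $ i)" for i
    proof (cases "i \<in> Z")
      case True
      then show ?thesis using eZ[OF True] by (simp add: Z_def b_def)
    next
      case False
      have s: "t * \<bar>b $ i\<bar> < \<bar>a $ i\<bar>" by (rule small[OF False])
      have ab: "\<bar>t * b $ i\<bar> = t * \<bar>b $ i\<bar>" using tpos by (simp add: abs_mult)
      have "t * b $ i \<le> t * \<bar>b $ i\<bar>" using ab by linarith
      moreover have "- (t * \<bar>b $ i\<bar>) \<le> t * b $ i" using ab by linarith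
      ultimately have "t * b $ i \<le> t * \<bar>b $ i\<bar>" "- (t * \<bar>b $ i\<bar>) \<le> t * b $ i" by auto
      with s show ?thesis
        by (cases "a $ i > 0") (auto simp: sgn_if abs_if)
    qed
    have l1v: "l1norm (A *v v) = l1norm a + t * (\<Sum>i\<in>UNIV. sgn (a $ i) * b $ i)"
      by (simp add: Av l1norm_def pw sum.distrib sum_distrib_left)
    hence l1v': "l1norm (A *v v) \<le> l1norm a" using tpos eL by (simp add: b_def mult_nonneg_nonpos)
    have "(norm v)\<^sup>2 = (norm x)\<^sup>2 + (norm (t *\<^sub>R e))\<^sup>2"
      unfolding v_def by (rule norm_add_Pythagorean) (use ex in \<open>simp add: orthogonal_clauses\<close>)
    hence "(norm v)\<^sup>2 > 1" using x tpos e0 by simp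
    hence nv: "norm v > 1"
    proof -
      assume h: "(norm v)\<^sup>2 > 1"
      show ?thesis
      proof (rule ccontr)
        assume "\<not> 1 < norm v"
        hence "(norm v)\<^sup>2 \<le> 1" by (intro power_le_one) auto
        with h show False by simp
      qed
    qed
    define u where "u = (1 / norm v) *\<^sub>R v"
    have nu: "norm u = 1" using nv by (auto simp: u_def)
    have "l1norm (A *v u) = l1norm (A *v v) / norm v"
      using nv by (simp add: u_def matrix_vector_mult_scaleR l1norm_scale)
    also have "\<dots> \<le> l1norm a / norm v" using l1v' nv by (simp add: divide_right_mono)
    finally have u1: "l1norm (A *v u) \<le> l1norm a / norm v" .
    obtain i0 where "i0 \<in> - Z" using nZ by auto
    hence "\<bar>a $ i0\<bar> > 0" by (simp add: Z_def)
    moreover have "\<bar>a $ i0\<bar> \<le> l1norm a" unfolding l1norm_def by (rule member_le_sum) auto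
    ultimately have apos: "l1norm a > 0" by linarith
    have "l1norm a / norm v < l1norm a" using apos nv by (simp add: divide_less_eq)
    with u1 min nu show False unfolding a_def by fastforce
  qed
  have cZ: "card Z = CARD('n) - 1" using le ge by simp
  have "{i. (A *v x) $ i \<noteq> 0} = UNIV - Z" by (auto simp: Z_def a_def)
  hence "card {i. (A *v x) $ i \<noteq> 0} = CARD('N) - card Z" by (simp add: card_Diff_subset)
  also have "\<dots> = CARD('N) - CARD('n) + 1" using cZ NN by simp
  finally show ?thesis .
qed


theorem lemma8p3:
  fixes M :: "'w measure"
    and A :: "'w \<Rightarrow> real ^ 'n ^ 'N"
  assumes "prob_space M"
    and "CARD('N) > CARD('n)"
    and "prob_space.indep_vars M (\<lambda>_. borel) (\<lambda>(i, j) \<omega>. A \<omega> $ i $ j) UNIV"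
    and "\<And>i j. absolutely_continuous lborel (distr M lborel (\<lambda>\<omega>. A \<omega> $ i $ j))"
  shows "AE \<omega> in M. \<forall>x :: real ^ 'n. norm x = 1 \<and>
            (\<forall>y :: real ^ 'n. norm y = 1 \<longrightarrow> l1norm (A \<omega> *v x) \<le> l1norm (A \<omega> *v y))
          \<longrightarrow> card {i. (A \<omega> *v x) $ i \<noteq> 0} = CARD('N) - CARD('n) + 1"
proof -
  interpret prob_space M by (rule assms(1))
  have gen: "AE \<omega> in M. \<forall>\<sigma>\<in>{\<sigma>::'n\<Rightarrow>'N. inj \<sigma>}. det (\<chi> r. A \<omega> $ \<sigma> r) \<noteq> 0"
  proof (rule AE_finite_allI)
    show "finite {\<sigma>::'n\<Rightarrow>'N. inj \<sigma>}" by simp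
  next
    fix \<sigma> :: "'n \<Rightarrow> 'N" assume "\<sigma> \<in> {\<sigma>. inj \<sigma>}"
    hence "inj \<sigma>" by simp
    from det_sub_AE[OF assms(3) assms(4) this, of "mat 1" UNIV]
    show "AE \<omega> in M. det (\<chi> r. A \<omega> $ \<sigma> r) \<noteq> 0" by simp
  qed
  then show ?thesis
  proof eventually_elim
    case (elim \<omega>)
    show ?case
    proof (intro allI impI)
      fix x :: "real^'n"
      assume h: "norm x = 1 \<and> (\<forall>y :: real ^ 'n. norm y = 1 \<longrightarrow> l1norm (A \<omega> *v x) \<le> l1norm (A \<omega> *v y))"
      show "card {i. (A \<omega> *v x) $ i \<noteq> 0} = CARD('N) - CARD('n) + 1"
        by (rule minimizer_card) (use elim h assms(2) in auto)
    qed
  qed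
qed

end
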